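(* Let $t\ge2$, $n\ge1$, $\lambda$ a partition of length at most $tn+1$ with $t$-quotient $(\lambda^{(0)},\dots,\lambda^{(t-1)})$, and $0\le p,q\le t-1$ with $n_p(\lambda)+n_q(\lambda)=2n+1$. Let $\rho^*_{p,q}$ be the partition of length $2n+1$ obtained by adding $\lambda^{(p)}_1$ to each entry of $(\lambda^{(q)}_1,\dots,\lambda^{(q)}_{n_q(\lambda)},-\lambda^{(p)}_{n_p(\lambda)},\dots,-\lambda^{(p)}_1)$. Then \[s_{\rho^*_{p,q}}(X^t,\overline{X}^t,y^t)=\frac{(-1)^{\frac{n_p(\lambda)(n_p(\lambda)-1)}{2}}\,y^{t(\lambda^{(p)}_1+n_p(\lambda))}}{V(X^t,\overline{X}^t,y^t)}\det\begin{pmatrix}A^\lambda_{q,-q}&\overline{A}^\lambda_{p,t-p}\\ \overline{A}^\lambda_{q,-q}&A^\lambda_{p,t-p}\\ B^\lambda_{q,-q}&\overline{B}^\lambda_{p,t-p}\end{pmatrix},\] where $V(X^t,\overline{X}^t,y^t)=\prod_{1\le i<j\le n}(x_i^t-x_j^t)(x_i^t-\bar x_j^t)(x_j^t-\bar x_i^t)(\bar x_i^t-\bar x_j^t)\prod_{i=1}^n(x_i^t-y^t)(x_i^t-\bar x_i^t)(\bar x_i^t-y^t)$.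
   Context: $X=(x_1,\dots,x_n)$, $y$ indeterminates, $\bar x=1/x$, $\bar y=1/y$; $(X^t,\overline{X}^t,y^t)$ denotes the $2n+1$ variables $x_1^t,\dots,x_n^t,\bar x_1^t,\dots,\bar x_n^t,y^t$. $s_\mu(z_1,\dots,z_N)=\det(z_i^{\mu_j+N-j})/\det(z_i^{N-j})$. Beta-set $\beta_i(\lambda)=\lambda_i+tn+1-i$ ($1\le i\le tn+1$); $n_r(\lambda)$ is the number of entries congruent to $r$ mod $t$, and $\beta^{(r)}_1(\lambda)>\dots>\beta^{(r)}_{n_r(\lambda)}(\lambda)$ are those entries. $t$-quotient: writing $\beta^{(r)}_j(\lambda)=tb_j+r$, $\lambda^{(r)}=(b_j-n_r(\lambda)+j)_{j=1}^{n_r(\lambda)}$. For an integer $c$: $A^\lambda_{r,c}=(x_i^{\beta^{(r)}_j(\lambda)+c})$ and $\overline{A}^\lambda_{r,c}=(\bar x_i^{\beta^{(r)}_j(\lambda)+c})$ are $n\times n_r(\lambda)$ matrices ($1\le i\le n$, $1\le j\le n_r(\lambda)$); $B^\lambda_{r,c}=(y^{\beta^{(r)}_j(\lambda)+c})_j$ and $\overline{B}^\lambda_{r,c}=(\bar y^{\beta^{(r)}_j(\lambda)+c})_j$ are $1\times n_r(\lambda)$ row vectors. The displayed matrix is $(2n+1)\times(2n+1)$ in block form. *)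

theory Defs
  imports "Jordan_Normal_Form.Determinant"
begin

(* Partitions lam :: nat => nat are 1-indexed: lam 1 >= lam 2 >= ... ; lam 0 is unused. *)

definition beta :: "nat \<Rightarrow> nat \<Rightarrow> (nat \<Rightarrow> nat) \<Rightarrow> nat \<Rightarrow> nat" where
  "beta t n lam i = lam i + t * n + 1 - i"

text \<open>The entries of the beta-set congruent to r mod t, in decreasing order
  (the beta-set is strictly decreasing in i).\<close>
definition betas :: "nat \<Rightarrow> nat \<Rightarrow> (nat \<Rightarrow> nat) \<Rightarrow> nat \<Rightarrow> nat list" where
  "betas t n lam r = filter (\<lambda>b. b mod t = r) (map (beta t n lam) [1..<t * n + 2])"

definition nr :: "nat \<Rightarrow> nat \<Rightarrow> (nat \<Rightarrow> nat) \<Rightarrow> nat \<Rightarrow> nat" where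
  "nr t n lam r = length (betas t n lam r)"

definition betar :: "nat \<Rightarrow> nat \<Rightarrow> (nat \<Rightarrow> nat) \<Rightarrow> nat \<Rightarrow> nat \<Rightarrow> nat" where
  "betar t n lam r j = betas t n lam r ! (j - 1)"

text \<open>t-quotient component lam^(r)_j = b_j - n_r(lam) + j where beta^(r)_j = t b_j + r;
  entries with index outside 1..n_r(lam) are 0 (usual padding of partitions).\<close>
definition tquot :: "nat \<Rightarrow> nat \<Rightarrow> (nat \<Rightarrow> nat) \<Rightarrow> nat \<Rightarrow> nat \<Rightarrow> int" where
  "tquot t n lam r j =
     (if 1 \<le> j \<and> j \<le> nr t n lam r
      then int (betar t n lam r j div t) - int (nr t n lam r) + int j else 0)"

definition rho_star :: "nat \<Rightarrow> nat \<Rightarrow> (nat \<Rightarrow> nat) \<Rightarrow> nat \<Rightarrow> nat \<Rightarrow> nat \<Rightarrow> int" where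
  "rho_star t n lam p q k =
     tquot t n lam p 1 +
     (if k \<le> nr t n lam q then tquot t n lam q k
      else - tquot t n lam p (nr t n lam p + nr t n lam q + 1 - k))"

text \<open>Schur function s_mu(z_1,...,z_N) = det(z_i^(mu_j+N-j)) / det(z_i^(N-j));
  mu is 1-indexed, z is 0-indexed (z_i = z (i-1)).\<close>
definition schur :: "nat \<Rightarrow> (nat \<Rightarrow> int) \<Rightarrow> (nat \<Rightarrow> 'a::field) \<Rightarrow> 'a" where
  "schur N mu z =
     det (mat N N (\<lambda>(i, j). z i powi (mu (j + 1) + int N - int (j + 1))))
     / det (mat N N (\<lambda>(i, j). z i ^ (N - (j + 1))))"

text \<open>The 2n+1 variables (X^t, Xbar^t, y^t), 0-indexed; x is 1-indexed (x_1..x_n).\<close>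
definition vars_t :: "nat \<Rightarrow> nat \<Rightarrow> (nat \<Rightarrow> 'a::field) \<Rightarrow> 'a \<Rightarrow> nat \<Rightarrow> 'a" where
  "vars_t t n x y i =
     (if i < n then x (i + 1) ^ t
      else if i < 2 * n then inverse (x (i - n + 1)) ^ t
      else y ^ t)"

definition Vprod :: "nat \<Rightarrow> nat \<Rightarrow> (nat \<Rightarrow> 'a::field) \<Rightarrow> 'a \<Rightarrow> 'a" where
  "Vprod t n x y =
     (\<Prod>i\<in>{1..n}. \<Prod>j\<in>{i+1..n}.
        (x i ^ t - x j ^ t) * (x i ^ t - inverse (x j) ^ t)
        * (x j ^ t - inverse (x i) ^ t) * (inverse (x i) ^ t - inverse (x j) ^ t))
   * (\<Prod>i\<in>{1..n}. (x i ^ t - y ^ t) * (x i ^ t - inverse (x i) ^ t) * (inverse (x i) ^ t - y ^ t))"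

text \<open>The (2n+1) x (2n+1) block matrix
  [A_{q,-q}, Abar_{p,t-p}; Abar_{q,-q}, A_{p,t-p}; B_{q,-q}, Bbar_{p,t-p}], 0-indexed.\<close>
definition block_mat :: "nat \<Rightarrow> nat \<Rightarrow> (nat \<Rightarrow> nat) \<Rightarrow> nat \<Rightarrow> nat \<Rightarrow> (nat \<Rightarrow> 'a::field) \<Rightarrow> 'a \<Rightarrow> 'a mat" where
  "block_mat t n lam p q x y =
     mat (2 * n + 1) (2 * n + 1) (\<lambda>(i, j).
       let w = (if i < n then x (i + 1) else if i < 2 * n then inverse (x (i - n + 1)) else y)
       in if j < nr t n lam q
          then w powi (int (betar t n lam q (j + 1)) - int q)
          else inverse w powi (int (betar t n lam p (j - nr t n lam q + 1)) + int t - int p))"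

end

theory Submission
  imports Defs
begin

lemma det_scale_rows:
  fixes c :: "nat \<Rightarrow> 'a::comm_ring_1"
  shows "det (mat N N (\<lambda>(i,j). c i * f i j)) = (\<Prod>i<N. c i) * det (mat N N (\<lambda>(i,j). f i j))"
proof -
  have C1: "mat N N (\<lambda>(i,j). c i * f i j) \<in> carrier_mat N N" by simp
  have C2: "mat N N (\<lambda>(i,j). f i j) \<in> carrier_mat N N" by simp
  show ?thesis
    unfolding det_def'[OF C1] det_def'[OF C2] sum_distrib_left
  proof (rule sum.cong[OF refl])
    fix p assume "p \<in> {p. p permutes {0..<N}}"
    hence p: "\<And>i. i < N \<Longrightarrow> p i < N" by (auto dest: permutes_in_image)
    have "(\<Prod>i = 0..<N. mat N N (\<lambda>(i,j). c i * f i j) $$ (i, p i))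
        = (\<Prod>i = 0..<N. c i * f i (p i))" by (rule prod.cong) (auto simp: p)
    also have "\<dots> = (\<Prod>i<N. c i) * (\<Prod>i = 0..<N. f i (p i))"
      by (simp add: prod.distrib atLeast0LessThan)
    also have "(\<Prod>i = 0..<N. f i (p i)) = (\<Prod>i = 0..<N. mat N N (\<lambda>(i,j). f i j) $$ (i, p i))"
      by (rule prod.cong) (auto simp: p)
    finally show "signof p * (\<Prod>i = 0..<N. mat N N (\<lambda>(i,j). c i * f i j) $$ (i, p i))
       = (\<Prod>i<N. c i) * (signof p * (\<Prod>i = 0..<N. mat N N (\<lambda>(i,j). f i j) $$ (i, p i)))"
      by (simp add: ac_simps)
  qed
qed

lemma vdm:
  fixes z :: "nat \<Rightarrow> 'a::comm_ring_1"
  shows "det (mat N N (\<lambda>(i,j). z i ^ (N - Suc j))) = (\<Prod>i<N. \<Prod>j\<in>{Suc i..<N}. (z i - z j))"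
proof (induction N)
  case 0
  show ?case by (simp add: det_dim_zero)
next
  case (Suc N)
  define M where "M = Suc N"
  define c where "c = z N"
  define A where "A = mat M M (\<lambda>(i,j). z i ^ (M - Suc j))"
  define E where "E = mat M M (\<lambda>(k,j). if k = j then 1 else if k = Suc j then - c else (0::'a))"
  have A: "A \<in> carrier_mat M M" and E: "E \<in> carrier_mat M M" unfolding A_def E_def by auto
  have detE: "det E = 1"
  proof -
    have "det E = prod_list (diag_mat E)"
      by (rule det_lower_triangular[OF _ E]) (auto simp: E_def)
    also have "\<dots> = 1" unfolding prod_list_diag_prod by (simp add: E_def)
    finally show ?thesis .
  qed
  define AE where "AE = mat M M (\<lambda>(i,j). if j < N then (z i - c) * z i ^ (N - Suc j) else 1)"
  have prodAE: "A * E = AE"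
  proof (rule eq_matI)
    fix i j assume i: "i < dim_row AE" and j: "j < dim_col AE"
    hence i: "i < M" and j: "j < M" by (auto simp: AE_def)
    have "(A * E) $$ (i,j) = (\<Sum>k\<in>{0..<M}. z i ^ (M - Suc k) * E $$ (k, j))"
      using i j A E by (simp add: scalar_prod_def A_def)
    also have "\<dots> = (\<Sum>k\<in>{0..<M}. (if k = j then z i ^ (M - Suc k) else 0)
                   + (if k = Suc j then - c * z i ^ (M - Suc k) else 0))"
      by (rule sum.cong) (auto simp: E_def j)
    also have "\<dots> = z i ^ (M - Suc j) + (if Suc j < M then - c * z i ^ (M - Suc (Suc j)) else 0)"
      using j by (simp add: sum.distrib)
    also have "\<dots> = AE $$ (i,j)"
    proof (cases "j < N")
      case True
      hence "M - Suc j = Suc (N - Suc j)" "M - Suc (Suc j) = N - Suc j" by (auto simp: M_def)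
      thus ?thesis using True i j by (simp add: AE_def M_def algebra_simps)
    next
      case False
      thus ?thesis using i j by (simp add: AE_def M_def)
    qed
    finally show "(A * E) $$ (i,j) = AE $$ (i,j)" .
  qed (auto simp: AE_def A_def E_def)
  have "det A = det AE" using det_mult[OF A E] detE prodAE by simp
  also have "\<dots> = (\<Sum>j<M. AE $$ (N,j) * cofactor AE N j)"
    by (rule laplace_expansion_row) (auto simp: AE_def M_def)
  also have "\<dots> = (\<Sum>j<M. if j = N then cofactor AE N N else 0)"
    by (rule sum.cong) (auto simp: AE_def M_def c_def)
  also have "\<dots> = cofactor AE N N" by (simp add: M_def)
  also have "\<dots> = det (mat_delete AE N N)" by (simp add: cofactor_def)
  also have "mat_delete AE N N = mat N N (\<lambda>(i,j). (z i - c) * z i ^ (N - Suc j))"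
    by (rule eq_matI) (auto simp: mat_delete_def AE_def M_def)
  also have "det \<dots> = (\<Prod>i<N. z i - c) * det (mat N N (\<lambda>(i,j). z i ^ (N - Suc j)))"
    by (rule det_scale_rows)
  also have "\<dots> = (\<Prod>i<N. z i - c) * (\<Prod>i<N. \<Prod>j\<in>{Suc i..<N}. (z i - z j))"
    using Suc.IH by simp
  also have "\<dots> = (\<Prod>i<M. \<Prod>j\<in>{Suc i..<M}. (z i - z j))"
    by (simp add: M_def c_def prod.distrib[symmetric] prod.atLeastLessThan_Suc mult.commute)
  finally show ?case by (simp add: A_def M_def)
qed


lemma prod_cross:
  fixes f :: "nat \<Rightarrow> nat \<Rightarrow> 'a::comm_monoid_mult"
  shows "(\<Prod>i<n. \<Prod>j<n. f i j) = (\<Prod>i<n. \<Prod>j\<in>{Suc i..<n}. f i j * f j i) * (\<Prod>i<n. f i i)"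
proof (induction n)
  case 0 then show ?case by simp
next
  case (Suc n)
  have "(\<Prod>i<Suc n. \<Prod>j<Suc n. f i j) = (\<Prod>i<n. \<Prod>j<n. f i j) * (\<Prod>i<n. f i n) * (\<Prod>j<n. f n j) * f n n"
    by (simp add: prod.distrib ac_simps)
  also have "\<dots> = (\<Prod>i<n. \<Prod>j\<in>{Suc i..<n}. f i j * f j i) * (\<Prod>i<n. f i i) * (\<Prod>i<n. f i n) * (\<Prod>j<n. f n j) * f n n"
    using Suc.IH by simp
  also have "\<dots> = (\<Prod>i<Suc n. \<Prod>j\<in>{Suc i..<Suc n}. f i j * f j i) * (\<Prod>i<Suc n. f i i)"
    by (simp add: prod.distrib prod.atLeastLessThan_Suc ac_simps)
  finally show ?case .
qed

lemma det_rev_cols: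
  assumes "A \<in> carrier_mat N N" and "a + m \<le> N"
  shows "det (mat N N (\<lambda>(i,j). A $$ (i, if a \<le> j \<and> j < a + m then 2*a+m-1-j else j)))
         = (-1)^(m*(m-1) div 2) * det (A :: 'a :: comm_ring_1 mat)"
  using assms
proof (induction m arbitrary: a A rule: less_induct)
  case (less m)
  show ?case
  proof (cases "m < 2")
    case True
    have "mat N N (\<lambda>(i,j). A $$ (i, if a \<le> j \<and> j < a + m then 2*a+m-1-j else j)) = A"
    proof (intro eq_matI)
      fix i j assume "i < dim_row A" "j < dim_col A"
      moreover have "a \<le> j \<and> j < a + m \<Longrightarrow> 2*a+m-1-j = j" using True by auto
      ultimately show "mat N N (\<lambda>(i,j). A $$ (i, if a \<le> j \<and> j < a + m then 2*a+m-1-j else j)) $$ (i,j) = A $$ (i,j)"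
        using less.prems by auto
    qed (use less.prems in auto)
    moreover have "m*(m-1) div 2 = 0" using True by (cases m) auto
    ultimately show ?thesis by simp
  next
    case False
    then obtain k where m: "m = k + 2" by (metis add.commute le_Suc_ex not_less)
    define A' where "A' = swapcols a (a+k+1) A"
    have A': "A' \<in> carrier_mat N N" using less.prems by (simp add: A'_def)
    have "mat N N (\<lambda>(i,j). A $$ (i, if a \<le> j \<and> j < a + m then 2*a+m-1-j else j))
        = mat N N (\<lambda>(i,j). A' $$ (i, if a+1 \<le> j \<and> j < (a+1) + k then 2*(a+1)+k-1-j else j))"
      using less.prems unfolding A'_def m by (intro eq_matI) auto
    also have "det \<dots> = (-1)^(k*(k-1) div 2) * det A'"
      by (rule less.IH) (use m less.prems A' in auto)
    also have "det A' = - det A" unfolding A'_def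
      by (rule det_swapcols) (use m less.prems in auto)
    also have "(-1)^(k*(k-1) div 2) * (- det A) = (-1)^(m*(m-1) div 2) * det A"
    proof -
      have "m*(m-1) = k*(k-1) + 2*(2*k+1)" unfolding m by (cases k) (auto simp: algebra_simps)
      hence "m*(m-1) div 2 = k*(k-1) div 2 + (2*k+1)" by simp
      thus ?thesis by (simp add: power_add)
    qed
    finally show ?thesis .
  qed
qed


lemma prod_shift1: "(\<Prod>j\<in>{Suc m..n}. h j) = (\<Prod>j\<in>{m..<n}. h (Suc j))"
proof -
  have eq: "{Suc m..n} = Suc ` {m..<n}" by (auto simp: image_iff)
  show ?thesis unfolding eq by (subst prod.reindex) auto
qed

lemma vprod_eq:
  "(\<Prod>i<2*n+1. \<Prod>j\<in>{Suc i..<2*n+1}. (vars_t t n x y i - vars_t t n x y j)) = Vprod t n x (y::'a::field)"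
proof -
  define z where "z = vars_t t n x y"
  define a where "a i = x (Suc i) ^ t" for i
  define b where "b i = inverse (x (Suc i)) ^ t" for i
  define c where "c = y ^ t"
  define g where "g i = (\<Prod>j\<in>{Suc i..<2*n+1}. (z i - z j))" for i
  have za: "z i = a i" if "i < n" for i using that by (simp add: z_def vars_t_def a_def)
  have zb: "z (n + i) = b i" if "i < n" for i using that by (simp add: z_def vars_t_def b_def)
  have zc: "z (2*n) = c" by (simp add: z_def vars_t_def c_def)
  have split3: "(\<Prod>j\<in>{m..<2*n+1}. h j) = (\<Prod>j\<in>{m..<n}. h j) * (\<Prod>j<n. h (n+j)) * h (2*n)"
    if "m \<le> n" for m and h :: "nat \<Rightarrow> 'a"
  proof -
    have "(\<Prod>j\<in>{m..<2*n+1}. h j) = (\<Prod>j\<in>{m..<n}. h j) * (\<Prod>j\<in>{n..<2*n}. h j) * h (2*n)"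
      using that by (simp add: prod.atLeastLessThan_concat[symmetric, of m n "2*n"] )
    also have "(\<Prod>j\<in>{n..<2*n}. h j) = (\<Prod>j<n. h (n+j))"
      using prod.shift_bounds_nat_ivl[of h 0 n n] by (simp add: atLeast0LessThan mult_2 add.commute)
    finally show ?thesis .
  qed
  have g1: "g i = (\<Prod>j\<in>{Suc i..<n}. a i - a j) * (\<Prod>j<n. a i - b j) * (a i - c)" if "i < n" for i
  proof -
    have "g i = (\<Prod>j\<in>{Suc i..<n}. z i - z j) * (\<Prod>j<n. z i - z (n+j)) * (z i - z (2*n))"
      unfolding g_def by (rule split3) (use that in simp)
    also have "(\<Prod>j\<in>{Suc i..<n}. z i - z j) = (\<Prod>j\<in>{Suc i..<n}. a i - a j)"
      by (rule prod.cong) (auto simp: za that)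
    also have "(\<Prod>j<n. z i - z (n+j)) = (\<Prod>j<n. a i - b j)"
      by (rule prod.cong) (auto simp: za zb that)
    finally show ?thesis using that by (simp add: za zc)
  qed
  have g2: "g (n+i) = (\<Prod>j\<in>{Suc i..<n}. b i - b j) * (b i - c)" if "i < n" for i
  proof -
    have "g (n+i) = (\<Prod>j\<in>{n + Suc i..<n + n}. z (n+i) - z j) * (z (n+i) - z (2*n))"
      unfolding g_def using that by (simp add: mult_2 prod.atLeastLessThan_Suc)
    also have "(\<Prod>j\<in>{n + Suc i..<n + n}. z (n+i) - z j) = (\<Prod>j\<in>{Suc i..<n}. z (n+i) - z (n+j))"
      using prod.shift_bounds_nat_ivl[of "\<lambda>j. z (n+i) - z j" "Suc i" n n] by (simp add: add.commute)
    finally show ?thesis using that by (simp add: zb zc)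
  qed
  have "(\<Prod>i<2*n+1. g i) = (\<Prod>i<n. g i) * (\<Prod>i<n. g (n+i)) * g (2*n)"
    using split3[of 0 g] by (simp add: atLeast0LessThan)
  also have "g (2*n) = 1" by (simp add: g_def)
  also have "(\<Prod>i<n. g i) = (\<Prod>i<n. (\<Prod>j\<in>{Suc i..<n}. a i - a j) * (\<Prod>j<n. a i - b j) * (a i - c))"
    by (rule prod.cong) (auto simp: g1)
  also have "(\<Prod>i<n. g (n+i)) = (\<Prod>i<n. (\<Prod>j\<in>{Suc i..<n}. b i - b j) * (b i - c))"
    by (rule prod.cong) (auto simp: g2)
  finally have L: "(\<Prod>i<2*n+1. g i) =
     (\<Prod>i<n. \<Prod>j\<in>{Suc i..<n}. a i - a j) * (\<Prod>i<n. \<Prod>j<n. a i - b j) * (\<Prod>i<n. a i - c)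
     * ((\<Prod>i<n. \<Prod>j\<in>{Suc i..<n}. b i - b j) * (\<Prod>i<n. b i - c))"
    by (simp add: prod.distrib)
  have "Vprod t n x y = (\<Prod>i<n. \<Prod>j\<in>{Suc i..<n}. (a i - a j) * (a i - b j) * (a j - b i) * (b i - b j))
       * (\<Prod>i<n. (a i - c) * (a i - b i) * (b i - c))"
    unfolding Vprod_def
    by (simp add: prod_shift1[where m=0, simplified] prod_shift1 atLeast0LessThan a_def b_def c_def)
  also have "\<dots> = (\<Prod>i<n. \<Prod>j\<in>{Suc i..<n}. a i - a j) * ((\<Prod>i<n. \<Prod>j\<in>{Suc i..<n}. (a i - b j) * (a j - b i)) * (\<Prod>i<n. a i - b i))
     * (\<Prod>i<n. a i - c) * ((\<Prod>i<n. \<Prod>j\<in>{Suc i..<n}. b i - b j) * (\<Prod>i<n. b i - c))"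
    by (simp add: prod.distrib ac_simps)
  also have "\<dots> = (\<Prod>i<2*n+1. g i)" unfolding L prod_cross[of "\<lambda>i j. a i - b j" n]
    by (simp only: mult.assoc mult.commute mult.left_commute)
  finally show ?thesis by (simp add: g_def z_def)
qed


lemma split3:
  fixes h :: "nat \<Rightarrow> 'a::comm_monoid_mult"
  shows "(\<Prod>j<2*n+1. h j) = (\<Prod>j<n. h j) * (\<Prod>j<n. h (n+j)) * h (2*n)"
proof -
  have "(\<Prod>j\<in>{0..<2*n+1}. h j) = (\<Prod>j\<in>{0..<n}. h j) * (\<Prod>j\<in>{n..<2*n}. h j) * h (2*n)"
    by (simp add: prod.atLeastLessThan_concat[symmetric, of 0 n "2*n"] )
  also have "(\<Prod>j\<in>{n..<2*n}. h j) = (\<Prod>j<n. h (n+j))"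
    using prod.shift_bounds_nat_ivl[of h 0 n n] by (simp add: atLeast0LessThan mult_2 add.commute)
  finally show ?thesis by (simp add: atLeast0LessThan)
qed

lemma betar_mod:
  assumes "1 \<le> j" "j \<le> nr t n lam r"
  shows "betar t n lam r j mod t = r"
proof -
  have "j - 1 < length (betas t n lam r)" using assms by (simp add: nr_def)
  hence "betar t n lam r j \<in> set (betas t n lam r)" unfolding betar_def by (rule nth_mem)
  thus ?thesis unfolding betas_def set_filter by blast
qed

lemma betar_int:
  assumes "1 \<le> j" "j \<le> nr t n lam r"
  shows "int t * int (betar t n lam r j div t) = int (betar t n lam r j) - int r"
proof -
  have "betar t n lam r j div t * t + r = betar t n lam r j"
    using div_mult_mod_eq[of "betar t n lam r j" t] betar_mod[OF assms] by simp
  hence "int (betar t n lam r j div t) * int t + int r = int (betar t n lam r j)" by (metis of_nat_add of_nat_mult)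
  thus ?thesis by (simp add: algebra_simps)
qed

theorem lemma3p11:
  fixes t n p q :: nat and lam :: "nat \<Rightarrow> nat"
    and x :: "nat \<Rightarrow> 'a::field" and y :: 'a
  assumes "t \<ge> 2" and "n \<ge> 1"
    and "\<And>i. i \<ge> 1 \<Longrightarrow> lam (i + 1) \<le> lam i"
    and "\<And>i. i > t * n + 1 \<Longrightarrow> lam i = 0"
    and "p \<le> t - 1" and "q \<le> t - 1"
    and "nr t n lam p + nr t n lam q = 2 * n + 1"
    and "\<And>i. i \<in> {1..n} \<Longrightarrow> x i \<noteq> 0" and "y \<noteq> 0"
  shows "schur (2 * n + 1) (rho_star t n lam p q) (vars_t t n x y)
       = (-1) ^ (nr t n lam p * (nr t n lam p - 1) div 2)
         * y powi (int t * (tquot t n lam p 1 + int (nr t n lam p)))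
         / Vprod t n x y
         * det (block_mat t n lam p q x y)"
proof -
  define N where "N = 2 * n + 1"
  define nq where "nq = nr t n lam q"
  define np where "np = nr t n lam p"
  define K where "K = tquot t n lam p 1 + int np"
  define w where "w i = (if i < n then x (i + 1) else if i < 2 * n then inverse (x (i - n + 1)) else y)" for i
  define z where "z = vars_t t n x y"
  define B where "B = block_mat t n lam p q x y"
  define \<sigma> where "\<sigma> j = (if nq \<le> j \<and> j < nq + np then 2*nq+np-1-j else j)" for j
  have Nsum: "N = nq + np" using assms(7) by (simp add: N_def nq_def np_def)
  have wnz: "w i \<noteq> 0" if "i < N" for i
    using that assms(8,9) by (auto simp: w_def N_def)
  have zw: "z i = w i ^ t" for i by (simp add: z_def w_def vars_t_def)
  have B: "B \<in> carrier_mat N N" by (simp add: B_def block_mat_def N_def)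
  have entry: "z i powi (rho_star t n lam p q (j + 1) + int N - int (j + 1))
     = w i powi (int t * K) * B $$ (i, \<sigma> j)" if i: "i < N" and j: "j < N" for i j
  proof (cases "j < nq")
    case True
    define \<beta> where "\<beta> = betar t n lam q (j+1)"
    have sj: "\<sigma> j = j" using True by (simp add: \<sigma>_def)
    have Bij: "B $$ (i, \<sigma> j) = w i powi (int \<beta> - int q)"
      using i j True by (simp add: sj B_def block_mat_def N_def w_def Let_def \<beta>_def nq_def)
    have bi: "int t * int (\<beta> div t) = int \<beta> - int q"
      unfolding \<beta>_def by (rule betar_int) (use True nq_def in auto)
    have e: "int t * (rho_star t n lam p q (j + 1) + int N - int (j + 1)) = int t * K + (int \<beta> - int q)"
    proof -
      have "rho_star t n lam p q (j + 1) + int N - int (j + 1)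
          = K + int (\<beta> div t)"
        using True by (simp add: rho_star_def tquot_def K_def \<beta>_def nq_def Nsum)
      thus ?thesis using bi by (simp add: algebra_simps)
    qed
    show ?thesis unfolding zw power_int_power e Bij
      by (rule power_int_add) (use wnz[OF i] in auto)
  next
    case False
    define m where "m = N - j"
    define \<beta> where "\<beta> = betar t n lam p m"
    have m1: "1 \<le> m" "m \<le> np" using False j Nsum by (auto simp: m_def)
    have sj: "\<sigma> j - nq + 1 = m" "nq \<le> \<sigma> j" "\<sigma> j < N" using False j Nsum by (auto simp: \<sigma>_def m_def)
    have Bij: "B $$ (i, \<sigma> j) = inverse (w i) powi (int \<beta> + int t - int p)"
      using i j sj False by (simp add: B_def block_mat_def N_def w_def Let_def \<beta>_def nq_def)
    also have "\<dots> = w i powi (- (int \<beta> + int t - int p))"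
      by (simp only: power_int_minus power_int_inverse)
    finally have Bij: "B $$ (i, \<sigma> j) = w i powi (- (int \<beta> + int t - int p))" .
    have bi: "int t * int (\<beta> div t) = int \<beta> - int p"
      unfolding \<beta>_def by (rule betar_int) (use m1 np_def in auto)
    have e: "int t * (rho_star t n lam p q (j + 1) + int N - int (j + 1)) = int t * K + (- (int \<beta> + int t - int p))"
    proof -
      have idx: "nr t n lam p + nr t n lam q + 1 - (j + 1) = m" using Nsum by (simp add: m_def np_def nq_def)
      have "rho_star t n lam p q (j + 1) + int N - int (j + 1)
          = K - int (\<beta> div t) - 1"
        using False m1 j unfolding rho_star_def idx
        by (simp add: tquot_def K_def \<beta>_def nq_def np_def m_def of_nat_diff)
      hence "int t * (rho_star t n lam p q (j + 1) + int N - int (j + 1)) = int t * (K - int (\<beta> div t) - 1)"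
        by (rule arg_cong)
      thus ?thesis using bi by (simp add: right_diff_distrib)
    qed
    show ?thesis unfolding zw power_int_power e Bij
      by (rule power_int_add) (use wnz[OF i] in auto)
  qed
  have S: "mat N N (\<lambda>(i,j). z i powi (rho_star t n lam p q (j + 1) + int N - int (j + 1)))
     = mat N N (\<lambda>(i,j). w i powi (int t * K) * B $$ (i, \<sigma> j))"
    by (rule eq_matI) (auto simp del: of_nat_Suc simp: entry[simplified])
  have detS: "det (mat N N (\<lambda>(i,j). z i powi (rho_star t n lam p q (j + 1) + int N - int (j + 1))))
     = (\<Prod>i<N. w i powi (int t * K)) * ((-1)^(np*(np-1) div 2) * det B)"
    unfolding S det_scale_rows[where c="\<lambda>i. w i powi (int t * K)" and f="\<lambda>i j. B $$ (i, \<sigma> j)"]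
    unfolding \<sigma>_def by (subst det_rev_cols[OF B]) (auto simp: Nsum)
  have prodw: "(\<Prod>i<N. w i powi (int t * K)) = y powi (int t * K)"
  proof -
    have "(\<Prod>i<N. w i powi (int t * K)) = (\<Prod>i<n. w i powi (int t * K)) * (\<Prod>i<n. w (n+i) powi (int t * K)) * w (2*n) powi (int t * K)"
      unfolding N_def by (rule split3)
    also have "(\<Prod>i<n. w i powi (int t * K)) * (\<Prod>i<n. w (n+i) powi (int t * K)) = (\<Prod>i<n. 1)"
      unfolding prod.distrib[symmetric]
    proof (rule prod.cong[OF refl])
      fix i assume i: "i \<in> {..<n}"
      have "x (i+1) \<noteq> 0" using i assms(8) by auto
      thus "w i powi (int t * K) * w (n + i) powi (int t * K) = 1"
        using i by (simp add: w_def power_int_inverse)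
    qed
    finally show ?thesis by (simp add: w_def)
  qed
  have vd: "det (mat N N (\<lambda>(i,j). z i ^ (N - (j + 1)))) = Vprod t n x y"
    using vdm[of N z] vprod_eq[where n=n and t=t and x=x and y=y] by (simp add: N_def z_def)
  show ?thesis
    unfolding schur_def N_def[symmetric] z_def[symmetric] detS vd prodw
      B_def[symmetric] np_def[symmetric] K_def[symmetric]
    by (simp add: times_divide_eq_left ac_simps)
qed

end
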